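(* Let $\varepsilon\in[0,1)$ and $\mathcal{P},\mathcal{E}\subseteq\mathcal{D}(P)$. Then $$\beta\overline{W}_{\mathrm{GPO},\varepsilon}(\mathcal{P},\mathcal{E})=D_{\min,\varepsilon}(\mathcal{P}\|\mathcal{E}).$$
   Context: All Hilbert spaces are finite-dimensional; $\mathcal{D}(P)$ is the set of density operators on $P$; $T(X,Y)=\tfrac12\|X-Y\|_1$. Battery: qubit $B$ with basis $\{|0\rangle,|1\rangle\}$, $\pi_M=(1-\tfrac1M)|0\rangle\langle0|+\tfrac1M|1\rangle\langle1|$ for $M>1$, and $\Pi_M=\{\pi_{M'}:M'\in[M,\infty)\}$ (dirty battery $(|1\rangle\langle1|,\Pi_M)$). The one-shot extractable work into a dirty battery under a class $\mathfrak{F}$ is $\beta\overline{W}_{\mathfrak{F},\varepsilon}(\mathcal{P},\mathcal{E})=\log\sup\{M>1:\exists\mathcal{F}\in\mathfrak{F}\text{ with }T(\mathcal{F}(\rho),|1\rangle\langle1|)\le\varepsilon\ \forall\rho\in\mathcal{P}\text{ and }\mathcal{F}(\tau)\in\Pi_M\ \forall\tau\in\mathcal{E}\}$. GPO here means the class of CPTP maps, Gibbs preservation being the condition $\mathcal{F}(\tau)\in\Pi_M$. The smoothed min-relative entropy between sets is $D_{\min,\varepsilon}(\mathcal{P}\|\mathcal{E})=-\log\min\{\sup_{\tau\in\mathcal{E}}\operatorname{tr}[\tau E]:0\le E\le I,\ \sup_{\rho\in\mathcal{P}}\operatorname{tr}[\rho(I-E)]\le\varepsilon\}$, with $-\log 0=+\infty$.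 *)

theory Defs
  imports "HOL-Analysis.Analysis" "Jordan_Normal_Form.Schur_Decomposition"
begin

definition mtrace :: "complex mat \<Rightarrow> complex" where
  "mtrace A = (\<Sum>i<dim_row A. A $$ (i,i))"

definition hermitian_mat :: "complex mat \<Rightarrow> bool" where
  "hermitian_mat A \<longleftrightarrow> mat_adjoint A = A"

definition psd :: "nat \<Rightarrow> complex mat \<Rightarrow> bool" where
  "psd n A \<longleftrightarrow> A \<in> carrier_mat n n \<and> hermitian_mat A \<and>
     (\<forall>v \<in> carrier_vec n. Re (conjugate v \<bullet> (A *\<^sub>v v)) \<ge> 0)"

definition density :: "nat \<Rightarrow> complex mat set" where
  "density d = {\<rho>. psd d \<rho> \<and> mtrace \<rho> = 1}"

definition psd_sqrt :: "nat \<Rightarrow> complex mat \<Rightarrow> complex mat" where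
  "psd_sqrt n B = (THE S. psd n S \<and> S * S = B)"

definition trace_norm :: "complex mat \<Rightarrow> real" where
  "trace_norm A = Re (mtrace (psd_sqrt (dim_col A) (mat_adjoint A * A)))"

definition trace_dist :: "complex mat \<Rightarrow> complex mat \<Rightarrow> real" where
  "trace_dist X Y = trace_norm (X - Y) / 2"

definition lin_map :: "nat \<Rightarrow> nat \<Rightarrow> (complex mat \<Rightarrow> complex mat) \<Rightarrow> bool" where
  "lin_map d n F \<longleftrightarrow>
     (\<forall>A \<in> carrier_mat d d. F A \<in> carrier_mat n n) \<and>
     (\<forall>A \<in> carrier_mat d d. \<forall>B \<in> carrier_mat d d. F (A + B) = F A + F B) \<and>
     (\<forall>A \<in> carrier_mat d d. \<forall>c. F (c \<cdot>\<^sub>m A) = c \<cdot>\<^sub>m F A)"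

text \<open>The (i,j) block of size d of a (k*d) x (k*d) matrix, and
  (id_k \<otimes> F) applied blockwise.\<close>
definition blk :: "nat \<Rightarrow> complex mat \<Rightarrow> nat \<Rightarrow> nat \<Rightarrow> complex mat" where
  "blk d X i j = mat d d (\<lambda>(a,b). X $$ (i*d + a, j*d + b))"

definition ampl :: "nat \<Rightarrow> nat \<Rightarrow> nat \<Rightarrow> (complex mat \<Rightarrow> complex mat) \<Rightarrow> complex mat \<Rightarrow> complex mat" where
  "ampl k d n F X = mat (k*n) (k*n)
     (\<lambda>(p,q). F (blk d X (p div n) (q div n)) $$ (p mod n, q mod n))"

definition completely_positive :: "nat \<Rightarrow> nat \<Rightarrow> (complex mat \<Rightarrow> complex mat) \<Rightarrow> bool" where
  "completely_positive d n F \<longleftrightarrow>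
     (\<forall>k. \<forall>X. psd (k*d) X \<longrightarrow> psd (k*n) (ampl k d n F X))"

definition trace_preserving :: "nat \<Rightarrow> (complex mat \<Rightarrow> complex mat) \<Rightarrow> bool" where
  "trace_preserving d F \<longleftrightarrow> (\<forall>A \<in> carrier_mat d d. mtrace (F A) = mtrace A)"

definition CPTP :: "nat \<Rightarrow> nat \<Rightarrow> (complex mat \<Rightarrow> complex mat) \<Rightarrow> bool" where
  "CPTP d n F \<longleftrightarrow> lin_map d n F \<and> completely_positive d n F \<and> trace_preserving d F"

definition ket1 :: "complex mat" where
  "ket1 = mat 2 2 (\<lambda>(i,j). if i = 1 \<and> j = 1 then 1 else 0)"

definition pi_M :: "real \<Rightarrow> complex mat" where
  "pi_M M = mat 2 2 (\<lambda>(i,j). if i = 0 \<and> j = 0 then complex_of_real (1 - 1/M)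
                             else if i = 1 \<and> j = 1 then complex_of_real (1/M) else 0)"

definition Pi_M :: "real \<Rightarrow> complex mat set" where
  "Pi_M M = {pi_M M' | M'. M' \<ge> M}"

definition elog :: "ereal \<Rightarrow> ereal" where
  "elog x = (if x = \<infinity> then \<infinity> else if x \<le> 0 then -\<infinity> else ereal (log 2 (real_of_ereal x)))"

text \<open>One-shot extractable work into the dirty battery under GPO (all CPTP maps),
  in units of beta.  Supremum of an empty set of M > 1 is taken as 1 (so log gives 0).\<close>
definition work_GPO :: "nat \<Rightarrow> real \<Rightarrow> complex mat set \<Rightarrow> complex mat set \<Rightarrow> ereal" where
  "work_GPO d \<epsilon> \<P> \<E> = elog (Sup ({1} \<union> {ereal M | M. M > 1 \<and>
      (\<exists>F. CPTP d 2 F \<and> (\<forall>\<rho> \<in> \<P>. trace_dist (F \<rho>) ket1 \<le> \<epsilon>)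
            \<and> (\<forall>\<tau> \<in> \<E>. F \<tau> \<in> Pi_M M))}))"

text \<open>Smoothed min-relative entropy between sets (sup over an empty set is 0, as
  the quantities are nonnegative).\<close>
definition Dmin :: "nat \<Rightarrow> real \<Rightarrow> complex mat set \<Rightarrow> complex mat set \<Rightarrow> ereal" where
  "Dmin d \<epsilon> \<P> \<E> = - elog (Inf {Sup ({0} \<union> {ereal (Re (mtrace (\<tau> * E))) | \<tau>. \<tau> \<in> \<E>}) | E.
      psd d E \<and> psd d (1\<^sub>m d - E) \<and>
      Sup ({0} \<union> {ereal (Re (mtrace (\<rho> * (1\<^sub>m d - E)))) | \<rho>. \<rho> \<in> \<P>}) \<le> ereal \<epsilon>})"

end

theory Submission
  imports Defs
begin

definition qf :: "nat \<Rightarrow> (nat \<Rightarrow> nat \<Rightarrow> complex) \<Rightarrow> (nat \<Rightarrow> complex) \<Rightarrow> complex" where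
  "qf n f v = (\<Sum>i<n. \<Sum>j<n. cnj (v i) * f i j * v j)"

definition hermF :: "nat \<Rightarrow> (nat \<Rightarrow> nat \<Rightarrow> complex) \<Rightarrow> bool" where
  "hermF n f \<longleftrightarrow> (\<forall>i<n. \<forall>j<n. f i j = cnj (f j i))"

definition psdF :: "nat \<Rightarrow> (nat \<Rightarrow> nat \<Rightarrow> complex) \<Rightarrow> bool" where
  "psdF n f \<longleftrightarrow> hermF n f \<and> (\<forall>v. 0 \<le> Re (qf n f v))"

definition trF :: "nat \<Rightarrow> (nat \<Rightarrow> nat \<Rightarrow> complex) \<Rightarrow> (nat \<Rightarrow> nat \<Rightarrow> complex) \<Rightarrow> complex" where
  "trF n f g = (\<Sum>a<n. \<Sum>b<n. f b a * g a b)"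

lemma sum_delta_mult_right:
  assumes "(m::nat) < n"
  shows "(\<Sum>j<n. g j * (if j = m then t else 0)) = g m * (t::complex)"
proof -
  have "(\<Sum>j<n. g j * (if j = m then t else 0)) = (\<Sum>j<n. if j = m then g m * t else 0)"
    by (rule sum.cong) auto
  also have "\<dots> = g m * t" using assms by simp
  finally show ?thesis .
qed

lemma sum_delta_mult_left:
  assumes "(m::nat) < n"
  shows "(\<Sum>j<n. (if j = m then t else 0) * g j) = (t::complex) * g m"
proof -
  have "(\<Sum>j<n. (if j = m then t else 0) * g j) = (\<Sum>j<n. if j = m then t * g m else 0)"
    by (rule sum.cong) auto
  also have "\<dots> = t * g m" using assms by simp
  finally show ?thesis .
qed

lemma qf_shift:
  assumes "hermF n f" "m < n"
  shows "qf n f (\<lambda>i. v i + (if i = m then t else 0)) =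
     qf n f v + t * cnj (\<Sum>j<n. f m j * v j) + cnj t * (\<Sum>j<n. f m j * v j) + cnj t * t * f m m"
proof -
  have h: "\<And>i. i < n \<Longrightarrow> f i m = cnj (f m i)" using assms unfolding hermF_def by blast
  have e1: "(\<Sum>i<n. cnj (v i) * f i m) = cnj (\<Sum>j<n. f m j * v j)"
    unfolding cnj_sum
  proof (rule sum.cong[OF refl])
    fix x assume "x \<in> {..<n}"
    then have "f x m = cnj (f m x)" using h by auto
    then show "cnj (v x) * f x m = cnj (f m x * v x)" by (simp add: mult.commute)
  qed
  have pw: "\<And>i j. cnj (v i + (if i = m then t else 0)) * f i j * (v j + (if j = m then t else 0)) =
      cnj (v i) * f i j * v j + (cnj (v i) * f i j) * (if j = m then t else 0)
      + (if i = m then cnj t else 0) * (f i j * v j)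
      + (if i = m then cnj t else 0) * (f i j * (if j = m then t else 0))"
    by (cases "i = m"; cases "j = m"; simp add: ring_distribs)
  have "qf n f (\<lambda>i. v i + (if i = m then t else 0)) =
     (\<Sum>i<n. \<Sum>j<n. cnj (v i) * f i j * v j) + (\<Sum>i<n. \<Sum>j<n. (cnj (v i) * f i j) * (if j = m then t else 0))
        + (\<Sum>i<n. \<Sum>j<n. (if i = m then cnj t else 0) * (f i j * v j))
        + (\<Sum>i<n. \<Sum>j<n. (if i = m then cnj t else 0) * (f i j * (if j = m then t else 0)))"
    unfolding qf_def pw by (simp only: sum.distrib)
  also have "(\<Sum>i<n. \<Sum>j<n. (cnj (v i) * f i j) * (if j = m then t else 0)) = (\<Sum>i<n. cnj (v i) * f i m * t)"
    using assms(2) by (simp only: sum_delta_mult_right)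
  also have "\<dots> = (\<Sum>i<n. cnj (v i) * f i m) * t" by (simp add: sum_distrib_right)
  also have "(\<Sum>i<n. \<Sum>j<n. (if i = m then cnj t else 0) * (f i j * v j)) = cnj t * (\<Sum>j<n. f m j * v j)"
    using assms(2) by (simp only: sum_delta_mult_left flip: sum_distrib_left)
  also have "(\<Sum>i<n. \<Sum>j<n. (if i = m then cnj t else 0) * (f i j * (if j = m then t else 0))) = cnj t * (f m m * t)"
    using assms(2) by (simp only: sum_delta_mult_left sum_delta_mult_right flip: sum_distrib_left)
  finally have "qf n f (\<lambda>i. v i + (if i = m then t else 0)) = qf n f v + (\<Sum>i<n. cnj (v i) * f i m) * t +
     cnj t * (\<Sum>j<n. f m j * v j) + cnj t * (f m m * t)" unfolding qf_def .
  then show ?thesis unfolding e1 by (simp add: ac_simps)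
qed


lemma qf_delta:
  assumes "(j::nat) < n"
  shows "qf n f (\<lambda>i. if i = j then 1 else 0) = f j j"
proof -
  have "qf n f (\<lambda>i. if i = j then 1 else 0) = (\<Sum>i<n. (if i = j then 1 else 0) * (\<Sum>k<n. f i k * (if k = j then 1 else 0)))"
    unfolding qf_def by (intro sum.cong refl) (auto simp: sum_distrib_left mult.assoc)
  also have "\<dots> = f j j" using assms by (simp only: sum_delta_mult_left sum_delta_mult_right) simp
  finally show ?thesis .
qed

lemma psdF_diag:
  assumes "psdF n f" "j < n"
  shows "f j j = of_real (Re (f j j))" "0 \<le> Re (f j j)"
proof -
  have "f j j = cnj (f j j)" using assms unfolding psdF_def hermF_def by blast
  then show "f j j = of_real (Re (f j j))" by (metis Reals_cnj_iff of_real_Re)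
  show "0 \<le> Re (f j j)" using assms qf_delta[OF assms(2), of f] unfolding psdF_def by metis
qed

lemma psdF_zero_row:
  assumes "psdF n f" "m < n" "f m m = 0" "j < n"
  shows "f m j = 0"
proof (rule ccontr)
  assume u0: "f m j \<noteq> 0"
  define u where "u = f m j"
  have hf: "hermF n f" using assms unfolding psdF_def by blast
  define v where "v = (\<lambda>i::nat. if i = j then (1::complex) else 0)"
  have su: "(\<Sum>k<n. f m k * v k) = u" unfolding v_def u_def using assms(4)
    by (simp only: sum_delta_mult_right) simp
  define s where "s = (\<bar>Re (f j j)\<bar> + 1) / (2 * (cmod u)^2)"
  have cu: "cmod u > 0" using u0 u_def by simp
  have "0 \<le> Re (qf n f (\<lambda>i. v i + (if i = m then - of_real s * u else 0)))"
    using assms(1) unfolding psdF_def by blast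
  also have "qf n f (\<lambda>i. v i + (if i = m then - of_real s * u else 0)) =
     f j j + (- of_real s * u) * cnj u + cnj (- of_real s * u) * u"
    using qf_shift[OF hf assms(2), of v "- of_real s * u"] su qf_delta[OF assms(4), of f] assms(3)
    unfolding v_def by simp
  also have "\<dots> = f j j - 2 * of_real s * (u * cnj u)" by (simp add: algebra_simps)
  also have "u * cnj u = of_real ((cmod u)^2)" by (simp only: complex_norm_square)
  finally have "0 \<le> Re (f j j) - 2 * s * (cmod u)^2" by simp
  moreover have "2 * s * (cmod u)^2 = \<bar>Re (f j j)\<bar> + 1" unfolding s_def using cu by simp
  ultimately show False by linarith
qed


lemma hermF_D: "hermF n f \<Longrightarrow> i < n \<Longrightarrow> j < n \<Longrightarrow> f i j = cnj (f j i)"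
  unfolding hermF_def by blast

lemma elim_psd:
  assumes "psdF n f" "m < n" "f m m = of_real c" "c > 0"
  shows "psdF n (\<lambda>i j. f i j - f i m * f m j / of_real c)"
proof -
  have hf: "hermF n f" using assms unfolding psdF_def by blast
  have herm: "hermF n (\<lambda>i j. f i j - f i m * f m j / of_real c)"
    unfolding hermF_def
  proof (intro allI impI)
    fix i j assume ij: "i < n" "j < n"
    show "f i j - f i m * f m j / of_real c = cnj (f j i - f j m * f m i / of_real c)"
      using hermF_D[OF hf ij] hermF_D[OF hf ij(1) assms(2)] hermF_D[OF hf ij(2) assms(2)]
      by (simp add: mult.commute)
  qed
  have "0 \<le> Re (qf n (\<lambda>i j. f i j - f i m * f m j / of_real c) v)" for v
  proof -
    define u where "u = (\<Sum>j<n. f m j * v j)"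
    define t where "t = - u / of_real c"
    have e1: "(\<Sum>i<n. cnj (v i) * f i m) = cnj u"
      unfolding cnj_sum u_def
    proof (rule sum.cong[OF refl])
      fix x assume "x \<in> {..<n}"
      then have "f x m = cnj (f m x)" using hermF_D[OF hf _ assms(2)] by blast
      then show "cnj (v x) * f x m = cnj (f m x * v x)" by (simp add: mult.commute)
    qed
    have "qf n (\<lambda>i j. f i j - f i m * f m j / of_real c) v =
       qf n f v - (\<Sum>i<n. \<Sum>j<n. (cnj (v i) * f i m) * (f m j * v j) / of_real c)"
      unfolding qf_def by (simp add: sum_subtractf[symmetric] algebra_simps)
    also have "(\<Sum>i<n. \<Sum>j<n. (cnj (v i) * f i m) * (f m j * v j) / of_real c) =
       (\<Sum>i<n. cnj (v i) * f i m) * (\<Sum>j<n. f m j * v j) / of_real c"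
      by (simp only: sum_divide_distrib sum_product)
    also have "\<dots> = cnj u * u / of_real c" unfolding e1 u_def ..
    also have "qf n f v - cnj u * u / of_real c = qf n f (\<lambda>i. v i + (if i = m then t else 0))"
      unfolding qf_shift[OF hf assms(2)] u_def[symmetric] t_def assms(3) using assms(4)
      by (simp add: field_simps)
    finally show ?thesis using assms(1) unfolding psdF_def by simp
  qed
  then show ?thesis using herm unfolding psdF_def by blast
qed


lemma core_supp:
  assumes "finite S" "psdF n g"
  shows "\<forall>f. psdF n f \<longrightarrow> S \<subseteq> {..<n} \<longrightarrow> (\<forall>i<n. \<forall>j<n. (i \<notin> S \<or> j \<notin> S) \<longrightarrow> f i j = 0)
     \<longrightarrow> 0 \<le> Re (trF n f g)"
  using assms(1)
proof (induction S rule: finite_induct)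
  case empty
  show ?case
  proof (intro allI impI)
    fix f :: "nat \<Rightarrow> nat \<Rightarrow> complex" assume "\<forall>i<n. \<forall>j<n. (i \<notin> {} \<or> j \<notin> {}) \<longrightarrow> f i j = 0"
    then have "trF n f g = 0" unfolding trF_def by (intro sum.neutral ballI) simp
    then show "0 \<le> Re (trF n f g)" by simp
  qed
next
  case (insert m S)
  show ?case
  proof (intro allI impI)
    fix f :: "nat \<Rightarrow> nat \<Rightarrow> complex" assume pf: "psdF n f" and sub: "insert m S \<subseteq> {..<n}"
      and supp: "\<forall>i<n. \<forall>j<n. (i \<notin> insert m S \<or> j \<notin> insert m S) \<longrightarrow> f i j = 0"
    have mn: "m < n" using sub by auto
    have hf: "hermF n f" using pf unfolding psdF_def by blast
    define c where "c = Re (f m m)"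
    have fc: "f m m = of_real c" unfolding c_def using psdF_diag[OF pf mn] by simp
    have c0: "0 \<le> c" unfolding c_def using psdF_diag[OF pf mn] by simp
    show "0 \<le> Re (trF n f g)"
    proof (cases "c = 0")
      case True
      then have z: "f m j = 0" if "j < n" for j using psdF_zero_row[OF pf mn _ that] fc by simp
      have z2: "f i m = 0" if "i < n" for i using hermF_D[OF hf that mn] z[OF that] by simp
      have "\<forall>i<n. \<forall>j<n. (i \<notin> S \<or> j \<notin> S) \<longrightarrow> f i j = 0"
        using supp z z2 by blast
      then show ?thesis using insert.IH pf sub by blast
    next
      case False
      then have cpos: "c > 0" using c0 by simp
      define f' where "f' = (\<lambda>i j. f i j - f i m * f m j / of_real c)"
      have pf': "psdF n f'" unfolding f'_def using elim_psd[OF pf mn fc cpos] .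
      have supp': "\<forall>i<n. \<forall>j<n. (i \<notin> S \<or> j \<notin> S) \<longrightarrow> f' i j = 0"
      proof (intro allI impI)
        fix i j assume ij: "i < n" "j < n" "i \<notin> S \<or> j \<notin> S"
        show "f' i j = 0"
        proof (cases "i = m")
          case True
          then show ?thesis unfolding f'_def using fc cpos by simp
        next
          case im: False
          show ?thesis
          proof (cases "j = m")
            case True
            then show ?thesis unfolding f'_def using fc cpos by simp
          next
            case False
            then show ?thesis unfolding f'_def using im ij supp mn by auto
          qed
        qed
      qed
      have IH: "0 \<le> Re (trF n f' g)" using insert.IH pf' sub supp' by blast
      define w where "w = (\<lambda>a. cnj (f m a))"
      have hg: "hermF n g" using assms(2) unfolding psdF_def by blast
      have "trF n f g = trF n f' g + (\<Sum>a<n. \<Sum>b<n. f b m * f m a * g a b) / of_real c"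
        unfolding trF_def f'_def sum_divide_distrib
        by (simp add: sum.distrib[symmetric] algebra_simps add_divide_distrib)
      also have "(\<Sum>a<n. \<Sum>b<n. f b m * f m a * g a b) = qf n g w"
        unfolding qf_def w_def
      proof (intro sum.cong refl)
        fix a b assume "a \<in> {..<n}" "b \<in> {..<n}"
        then have "f b m = cnj (f m b)" using hermF_D[OF hf _ mn] by blast
        then show "f b m * f m a * g a b = cnj (cnj (f m a)) * g a b * cnj (f m b)" by simp
      qed
      finally have eq: "trF n f g = trF n f' g + qf n g w / of_real c" .
      have "0 \<le> Re (qf n g w)" using assms(2) unfolding psdF_def by blast
      then have "0 \<le> Re (qf n g w / of_real c)" using cpos by simp
      then show ?thesis unfolding eq using IH by simp
    qed
  qed
qed

lemma core:
  assumes "psdF n f" "psdF n g"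
  shows "0 \<le> Re (trF n f g)"
  using core_supp[of "{..<n}" n g] assms by blast

lemma trF_real:
  assumes "hermF n f" "hermF n g"
  shows "trF n f g = of_real (Re (trF n f g))"
proof -
  have "cnj (trF n f g) = (\<Sum>a<n. \<Sum>b<n. g b a * f a b)"
    unfolding trF_def cnj_sum
  proof (intro sum.cong refl)
    fix a b assume "a \<in> {..<n}" "b \<in> {..<n}"
    then show "cnj (f b a * g a b) = g b a * f a b"
      using hermF_D[OF assms(1), of a b] hermF_D[OF assms(2), of b a] by simp
  qed
  also have "\<dots> = trF n f g" unfolding trF_def
    by (subst sum.swap) (simp add: mult.commute)
  finally show ?thesis by (metis Reals_cnj_iff of_real_Re)
qed

lemma adj_index:
  assumes "A \<in> carrier_mat n n" "i < n" "j < n"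
  shows "mat_adjoint A $$ (i,j) = cnj (A $$ (j,i))"
  using assms unfolding mat_adjoint_def by (simp add: mat_of_rows_def)

lemma adj_carrier: "A \<in> carrier_mat n n \<Longrightarrow> mat_adjoint A \<in> carrier_mat n n"
  unfolding mat_adjoint_def by (simp add: mat_of_rows_def)

lemma herm_iff:
  assumes "A \<in> carrier_mat n n"
  shows "hermitian_mat A \<longleftrightarrow> hermF n (\<lambda>i j. A $$ (i,j))"
proof
  assume "hermitian_mat A"
  then have "mat_adjoint A = A" unfolding hermitian_mat_def .
  then show "hermF n (\<lambda>i j. A $$ (i,j))" unfolding hermF_def
    using adj_index[OF assms] by (metis complex_cnj_cnj)
next
  assume h: "hermF n (\<lambda>i j. A $$ (i,j))"
  show "hermitian_mat A" unfolding hermitian_mat_def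
  proof (rule eq_matI)
    fix i j assume "i < dim_row A" "j < dim_col A"
    then show "mat_adjoint A $$ (i, j) = A $$ (i, j)"
      using adj_index[OF assms] assms hermF_D[OF h] by (metis carrier_matD)
  qed (use assms adj_carrier[OF assms] in auto)
qed

lemma qform_eq:
  assumes "A \<in> carrier_mat n n" "v \<in> carrier_vec n"
  shows "conjugate v \<bullet> (A *\<^sub>v v) = qf n (\<lambda>i j. A $$ (i,j)) (\<lambda>i. v $ i)"
  using assms unfolding qf_def scalar_prod_def
  by (auto simp: sum_distrib_left mult.assoc row_def scalar_prod_def lessThan_atLeast0 intro!: sum.cong)

lemma psd_iff:
  assumes "A \<in> carrier_mat n n"
  shows "psd n A \<longleftrightarrow> psdF n (\<lambda>i j. A $$ (i,j))"
proof
  assume p: "psd n A"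
  show "psdF n (\<lambda>i j. A $$ (i,j))" unfolding psdF_def
  proof (intro conjI allI)
    show "hermF n (\<lambda>i j. A $$ (i,j))" using p herm_iff[OF assms] unfolding psd_def by blast
    fix v :: "nat \<Rightarrow> complex"
    have "qf n (\<lambda>i j. A $$ (i,j)) v = qf n (\<lambda>i j. A $$ (i,j)) (\<lambda>i. vec n v $ i)"
      unfolding qf_def by (intro sum.cong refl) auto
    also have "\<dots> = conjugate (vec n v) \<bullet> (A *\<^sub>v vec n v)" using qform_eq[OF assms, of "vec n v"] by simp
    finally show "0 \<le> Re (qf n (\<lambda>i j. A $$ (i,j)) v)" using p unfolding psd_def by auto
  qed
next
  assume p: "psdF n (\<lambda>i j. A $$ (i,j))"
  show "psd n A" unfolding psd_def
    using assms herm_iff[OF assms] p qform_eq[OF assms] unfolding psdF_def by auto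
qed

lemma mtrace_mult:
  assumes "A \<in> carrier_mat n n" "B \<in> carrier_mat n n"
  shows "mtrace (A * B) = trF n (\<lambda>i j. B $$ (i,j)) (\<lambda>i j. A $$ (i,j))"
  using assms unfolding mtrace_def trF_def scalar_prod_def
  by (auto simp: row_def col_def mult.commute scalar_prod_def lessThan_atLeast0 intro!: sum.cong)

lemma mtrace_eq: "A \<in> carrier_mat n n \<Longrightarrow> mtrace A = (\<Sum>i<n. A $$ (i,i))"
  unfolding mtrace_def by simp

lemma sum2: "(\<Sum>i<(2::nat). f i) = f 0 + f 1"
  by (simp add: numeral_2_eq_2)

lemma sum2': "(\<Sum>i\<in>{0..<(2::nat)}. f i) = f 0 + f 1"
  by (simp add: numeral_2_eq_2)

lemma less2: "(i::nat) < 2 \<longleftrightarrow> i = 0 \<or> i = 1" by auto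

lemma mult22:
  assumes "A \<in> carrier_mat 2 2" "B \<in> carrier_mat 2 2" "i < 2" "j < 2"
  shows "(A * B) $$ (i,j) = A $$ (i,0) * B $$ (0,j) + A $$ (i,1) * B $$ (1,j)"
  using assms by (simp add: scalar_prod_def sum2' row_def col_def)

definition dg :: "complex \<Rightarrow> complex mat" where
  "dg x = mat 2 2 (\<lambda>(i,j). if i = j then x else 0)"

lemma dg_carrier[simp]: "dg x \<in> carrier_mat 2 2" unfolding dg_def by simp

lemma dg_dim[simp]: "dim_row (dg x) = 2" "dim_col (dg x) = 2" unfolding dg_def by simp_all

lemma dg_index: "i < 2 \<Longrightarrow> j < 2 \<Longrightarrow> dg x $$ (i,j) = (if i = j then x else 0)"
  unfolding dg_def by simp

lemma sqrt_unique:
  assumes S: "S \<in> carrier_mat 2 2" "psd 2 S" "S * S = dg (of_real c)" and c: "0 \<le> c"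
  shows "S = dg (of_real (sqrt c))"
proof -
  have pf: "psdF 2 (\<lambda>i j. S $$ (i,j))" using psd_iff[OF S(1)] S(2) by blast
  have hf: "hermF 2 (\<lambda>i j. S $$ (i,j))" using pf unfolding psdF_def by blast
  define p where "p = Re (S $$ (0,0))"
  define r where "r = Re (S $$ (1,1))"
  define s where "s = S $$ (0,1)"
  have Sp: "S $$ (0,0) = of_real p" and p0: "0 \<le> p"
    using psdF_diag[OF pf, of 0] unfolding p_def by auto
  have Sr: "S $$ (1,1) = of_real r" and r0: "0 \<le> r"
    using psdF_diag[OF pf, of 1] unfolding r_def by auto
  have Ss: "S $$ (1,0) = cnj s" unfolding s_def using hermF_D[OF hf, of 1 0] by simp
  have e00: "S $$ (0,0) * S $$ (0,0) + S $$ (0,1) * S $$ (1,0) = of_real c"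
    using mult22[OF S(1) S(1), of 0 0] S(3) dg_index[of 0 0] by simp
  have e01: "S $$ (0,0) * S $$ (0,1) + S $$ (0,1) * S $$ (1,1) = 0"
    using mult22[OF S(1) S(1), of 0 1] S(3) dg_index[of 0 1] by simp
  have e11: "S $$ (1,0) * S $$ (0,1) + S $$ (1,1) * S $$ (1,1) = of_real c"
    using mult22[OF S(1) S(1), of 1 1] S(3) dg_index[of 1 1] by simp
  have s0: "s = 0"
  proof (cases "p + r = 0")
    case True
    then have "p = 0" using p0 r0 by simp
    then show ?thesis using psdF_zero_row[OF pf, of 0 1] Sp unfolding s_def by simp
  next
    case False
    from e01 have "s * of_real (p + r) = 0" unfolding Sp Sr s_def[symmetric] by (simp add: algebra_simps)
    then show ?thesis using False by (metis mult_eq_0_iff of_real_eq_0_iff)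
  qed
  have "of_real (p * p) = (of_real c :: complex)" using e00 unfolding Sp s_def[symmetric] s0 by simp
  then have "p * p = c" using of_real_eq_iff by blast
  then have ps: "p = sqrt c" using p0 by (metis real_sqrt_abs abs_of_nonneg power2_eq_square)
  have "of_real (r * r) = (of_real c :: complex)" using e11 unfolding Sr Ss s0 by simp
  then have "r * r = c" using of_real_eq_iff by blast
  then have rs: "r = sqrt c" using r0 by (metis real_sqrt_abs abs_of_nonneg power2_eq_square)
  show ?thesis
  proof (rule eq_matI)
    fix i j assume "i < dim_row (dg (of_real (sqrt c)))" "j < dim_col (dg (of_real (sqrt c)))"
    then have "i < 2" "j < 2" by auto
    then show "S $$ (i,j) = dg (of_real (sqrt c)) $$ (i,j)"
      using Sp Sr Ss s0 ps rs unfolding dg_index[OF \<open>i < 2\<close> \<open>j < 2\<close>] s_def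
      by (auto simp: less2)
  qed (use S(1) in auto)
qed

lemma dg_psd: "0 \<le> x \<Longrightarrow> psd 2 (dg (of_real x))"
proof -
  assume x: "0 \<le> x"
  have "psdF 2 (\<lambda>i j. dg (of_real x) $$ (i,j))"
    unfolding psdF_def hermF_def qf_def
    using x by (auto simp: dg_index sum2 less2 mult.commute[of "cnj _"] complex_mult_cnj mult.assoc)
  then show ?thesis using psd_iff[of "dg (of_real x)" 2] by simp
qed

lemma dg_sq: "dg (of_real x) * dg (of_real x) = dg (of_real (x * x))"
proof (rule eq_matI)
  fix i j assume "i < dim_row (dg (of_real (x * x)))" "j < dim_col (dg (of_real (x * x)))"
  then have ij: "i < 2" "j < 2" by auto
  show "(dg (of_real x) * dg (of_real x)) $$ (i,j) = dg (of_real (x * x)) $$ (i,j)"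
    unfolding mult22[OF dg_carrier dg_carrier ij] using ij by (auto simp: dg_index less2)
qed auto

lemma trace_norm_2:
  assumes A: "A \<in> carrier_mat 2 2" "hermitian_mat A" "A $$ (0,0) + A $$ (1,1) = 0"
  shows "trace_norm A = 2 * sqrt ((Re (A $$ (0,0)))^2 + (cmod (A $$ (0,1)))^2)"
proof -
  have hf: "hermF 2 (\<lambda>i j. A $$ (i,j))" using herm_iff[OF A(1)] A(2) by blast
  define a where "a = Re (A $$ (0,0))"
  define b where "b = A $$ (0,1)"
  define c where "c = a^2 + (cmod b)^2"
  have Aa: "A $$ (0,0) = of_real a" unfolding a_def using hermF_D[OF hf, of 0 0]
    by (metis Reals_cnj_iff of_real_Re zero_less_numeral)
  have Ad: "A $$ (1,1) = - of_real a" using A(3) Aa by (simp add: add_eq_0_iff)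
  have Ab: "A $$ (1,0) = cnj b" unfolding b_def using hermF_D[OF hf, of 1 0] by simp
  have adj: "mat_adjoint A = A" using A(2) unfolding hermitian_mat_def .
  have bb: "b * cnj b = of_real ((cmod b)^2)" by (simp only: complex_norm_square)
  have bb': "cnj b * b = of_real (cmod b) * of_real (cmod b)" using bb by (simp add: mult.commute power2_eq_square)
  have Ab': "A $$ (0, Suc 0) = b" unfolding b_def by simp
  have AA: "mat_adjoint A * A = dg (of_real c)"
  proof (rule eq_matI)
    fix i j assume "i < dim_row (dg (of_real c))" "j < dim_col (dg (of_real c))"
    then have ij: "i < 2" "j < 2" by auto
    show "(mat_adjoint A * A) $$ (i,j) = dg (of_real c) $$ (i,j)"
      unfolding adj mult22[OF A(1) A(1) ij] dg_index[OF ij] c_def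
      using ij Aa Ad Ab Ab' bb bb' 
      by (auto simp: less2 power2_eq_square algebra_simps)
  qed (use A(1) in \<open>auto simp: adj\<close>)
  have c0: "0 \<le> c" unfolding c_def by simp
  have dc: "dim_col A = 2" using A(1) by simp
  have "psd_sqrt 2 (dg (of_real c)) = dg (of_real (sqrt c))"
    unfolding psd_sqrt_def
  proof (rule the_equality)
    show "psd 2 (dg (of_real (sqrt c))) \<and> dg (of_real (sqrt c)) * dg (of_real (sqrt c)) = dg (of_real c)"
      using dg_psd[of "sqrt c"] dg_sq[of "sqrt c"] c0 by simp
    fix S assume "psd 2 S \<and> S * S = dg (of_real c)"
    then show "S = dg (of_real (sqrt c))" using sqrt_unique[of S c] c0 unfolding psd_def by blast
  qed
  then have "trace_norm A = Re (mtrace (dg (of_real (sqrt c))))"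
    unfolding trace_norm_def dc AA by simp
  also have "\<dots> = 2 * sqrt c" by (simp add: mtrace_eq[of _ 2] sum2 dg_index)
  finally show ?thesis unfolding c_def a_def b_def .
qed

lemma sum_mult_product': "(\<Sum>p<k*d. h p) = (\<Sum>i<k. \<Sum>a<d. h (a + i * (d::nat)))"
  by (rule sum_mult_product)

lemma idx_lt: "(i::nat) < k \<Longrightarrow> a < d \<Longrightarrow> a + i * d < k * d"
proof -
  assume "i < k" "a < d"
  then have "a + i * d < d + i * d" by simp
  also have "\<dots> = Suc i * d" by simp
  also have "\<dots> \<le> k * d" using \<open>i < k\<close> by (intro mult_right_mono) auto
  finally show ?thesis .
qed

lemma swap4:
  "(\<Sum>i\<in>I. \<Sum>a\<in>A. \<Sum>j\<in>J. \<Sum>b\<in>B. f i a j b) = (\<Sum>a\<in>A. \<Sum>b\<in>B. \<Sum>i\<in>I. \<Sum>j\<in>J. f i a j b)"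
proof -
  have "(\<Sum>i\<in>I. \<Sum>a\<in>A. \<Sum>j\<in>J. \<Sum>b\<in>B. f i a j b) = (\<Sum>a\<in>A. \<Sum>i\<in>I. \<Sum>j\<in>J. \<Sum>b\<in>B. f i a j b)"
    by (rule sum.swap)
  also have "\<dots> = (\<Sum>a\<in>A. \<Sum>i\<in>I. \<Sum>b\<in>B. \<Sum>j\<in>J. f i a j b)"
    by (intro sum.cong refl sum.swap)
  also have "\<dots> = (\<Sum>a\<in>A. \<Sum>b\<in>B. \<Sum>i\<in>I. \<Sum>j\<in>J. f i a j b)"
    by (intro sum.cong refl sum.swap)
  finally show ?thesis .
qed

lemma Z_psd:
  assumes "psdF (k*d) x"
  shows "psdF d (\<lambda>a b. \<Sum>i<k. \<Sum>j<k. cnj (v i) * v j * x (a + i*d) (b + j*d))"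
proof -
  have hx: "hermF (k*d) x" using assms unfolding psdF_def by blast
  have herm: "hermF d (\<lambda>a b. \<Sum>i<k. \<Sum>j<k. cnj (v i) * v j * x (a + i*d) (b + j*d))"
    unfolding hermF_def
  proof (intro allI impI)
    fix a b assume ab: "a < d" "b < d"
    have "cnj (\<Sum>i<k. \<Sum>j<k. cnj (v i) * v j * x (b + i*d) (a + j*d)) =
          (\<Sum>i<k. \<Sum>j<k. v i * cnj (v j) * x (a + j*d) (b + i*d))"
      unfolding cnj_sum
    proof (intro sum.cong refl)
      fix i j assume "i \<in> {..<k}" "j \<in> {..<k}"
      then have "a + j*d < k*d" "b + i*d < k*d" using idx_lt ab by auto
      then have "x (b + i*d) (a + j*d) = cnj (x (a + j*d) (b + i*d))"
        using hermF_D[OF hx, of "b + i*d" "a + j*d"] by simp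
      then show "cnj (cnj (v i) * v j * x (b + i * d) (a + j * d)) = v i * cnj (v j) * x (a + j * d) (b + i * d)"
        by simp
    qed
    also have "\<dots> = (\<Sum>j<k. \<Sum>i<k. v i * cnj (v j) * x (a + j*d) (b + i*d))"
      by (rule sum.swap)
    finally show "(\<Sum>i<k. \<Sum>j<k. cnj (v i) * v j * x (a + i*d) (b + j*d)) =
        cnj (\<Sum>i<k. \<Sum>j<k. cnj (v i) * v j * x (b + i*d) (a + j*d))"
      by (simp add: mult.commute)
  qed
  have "0 \<le> Re (qf d (\<lambda>a b. \<Sum>i<k. \<Sum>j<k. cnj (v i) * v j * x (a + i*d) (b + j*d)) w)" for w
  proof -
    define u where "u = (\<lambda>p. v (p div d) * w (p mod d))"
    have "qf (k*d) x u = (\<Sum>i<k. \<Sum>a<d. \<Sum>j<k. \<Sum>b<d. cnj (u (a + i*d)) * x (a + i*d) (b + j*d) * u (b + j*d))"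
      unfolding qf_def sum_mult_product' ..
    also have "\<dots> = (\<Sum>i<k. \<Sum>a<d. \<Sum>j<k. \<Sum>b<d. cnj (v i * w a) * x (a + i*d) (b + j*d) * (v j * w b))"
      unfolding u_def by (intro sum.cong refl) auto
    also have "\<dots> = (\<Sum>a<d. \<Sum>b<d. \<Sum>i<k. \<Sum>j<k. cnj (v i * w a) * x (a + i*d) (b + j*d) * (v j * w b))"
      by (rule swap4)
    also have "\<dots> = qf d (\<lambda>a b. \<Sum>i<k. \<Sum>j<k. cnj (v i) * v j * x (a + i*d) (b + j*d)) w"
      unfolding qf_def sum_distrib_left sum_distrib_right by (intro sum.cong refl) (simp add: algebra_simps)
    finally show ?thesis using assms unfolding psdF_def by metis
  qed
  then show ?thesis using herm unfolding psdF_def by blast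
qed


lemma trF_cnj:
  assumes "hermF n K" "\<And>a b. a < n \<Longrightarrow> b < n \<Longrightarrow> Y a b = cnj (Z b a)"
  shows "cnj (trF n K Z) = trF n K Y"
proof -
  have "cnj (trF n K Z) = (\<Sum>a<n. \<Sum>b<n. K a b * Y b a)"
    unfolding trF_def cnj_sum
  proof (intro sum.cong refl)
    fix a b assume ab: "a \<in> {..<n}" "b \<in> {..<n}"
    then have "cnj (K b a) = K a b" using hermF_D[OF assms(1), of a b] by simp
    moreover have "cnj (Z a b) = Y b a" using assms(2)[of b a] ab by simp
    ultimately show "cnj (K b a * Z a b) = K a b * Y b a" by simp
  qed
  also have "\<dots> = trF n K Y" unfolding trF_def by (rule sum.swap)
  finally show ?thesis .
qed

lemma trF_sum: "trF n K (\<lambda>a b. \<Sum>i\<in>I. W i a b) = (\<Sum>i\<in>I. trF n K (W i))"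
  unfolding trF_def sum_distrib_left
  by (subst sum.swap) (intro sum.cong refl, rule sum.swap)

lemma trF_scale: "trF n K (\<lambda>a b. c * W a b) = c * trF n K W"
  unfolding trF_def sum_distrib_left by (intro sum.cong refl) (simp add: algebra_simps)

lemma trF_cong: "(\<And>a b. a < n \<Longrightarrow> b < n \<Longrightarrow> W a b = W' a b) \<Longrightarrow> trF n K W = trF n K W'"
  unfolding trF_def by (intro sum.cong refl) auto

definition gfun :: "nat \<Rightarrow> (nat \<Rightarrow> nat \<Rightarrow> complex) \<Rightarrow> (nat \<Rightarrow> nat \<Rightarrow> complex) \<Rightarrow> (nat \<Rightarrow> nat \<Rightarrow> complex) \<Rightarrow> nat \<Rightarrow> nat \<Rightarrow> complex" where
  "gfun d K0 K1 x p q = (if p mod 2 = q mod 2 then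
      trF d (if p mod 2 = 0 then K0 else K1) (\<lambda>a b. x (a + (p div 2)*d) (b + (q div 2)*d)) else 0)"

lemma block_psd:
  assumes px: "psdF (k*d) x" and p0: "psdF d K0" and p1: "psdF d K1"
  shows "psdF (k*2) (gfun d K0 K1 x)"
proof -
  have hx: "hermF (k*d) x" using px unfolding psdF_def by blast
  have hK: "hermF d (if s = 0 then K0 else K1)" for s :: nat using p0 p1 unfolding psdF_def by auto
  have herm: "hermF (k*2) (gfun d K0 K1 x)"
    unfolding hermF_def
  proof (intro allI impI)
    fix p q assume pq: "p < k*2" "q < k*2"
    have "p div 2 < k" "q div 2 < k" using pq by auto
    show "gfun d K0 K1 x p q = cnj (gfun d K0 K1 x q p)"
    proof (cases "p mod 2 = q mod 2")
      case True
      have "cnj (trF d (if p mod 2 = 0 then K0 else K1) (\<lambda>a b. x (a + (q div 2)*d) (b + (p div 2)*d)))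
          = trF d (if p mod 2 = 0 then K0 else K1) (\<lambda>a b. x (a + (p div 2)*d) (b + (q div 2)*d))"
      proof (rule trF_cnj[OF hK])
        fix a b assume ab: "a < d" "b < d"
        have "a + (p div 2)*d < k*d" "b + (q div 2)*d < k*d"
          using idx_lt ab \<open>p div 2 < k\<close> \<open>q div 2 < k\<close> by auto
        then show "x (a + (p div 2)*d) (b + (q div 2)*d) = cnj (x (b + (q div 2)*d) (a + (p div 2)*d))"
          using hermF_D[OF hx, of "a + (p div 2)*d" "b + (q div 2)*d"] by simp
      qed
      then show ?thesis unfolding gfun_def using True by simp
    next
      case False
      then show ?thesis unfolding gfun_def by simp
    qed
  qed
  have "0 \<le> Re (qf (k*2) (gfun d K0 K1 x) v)" for v
  proof -
    define Y where "Y = (\<lambda>i j a b. x (a + i*d) (b + j*d))"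
    define A where "A = (\<lambda>s i j. cnj (v (s + i*2)) * trF d (if s = 0 then K0 else K1) (Y i j) * v (s + j*2))"
    have "qf (k*2) (gfun d K0 K1 x) v =
      (\<Sum>i<k. \<Sum>s<2. \<Sum>j<k. \<Sum>t<2. cnj (v (s + i*2)) * gfun d K0 K1 x (s + i*2) (t + j*2) * v (t + j*2))"
      unfolding qf_def sum_mult_product' ..
    also have "\<dots> = (\<Sum>s<2. \<Sum>t<2. \<Sum>i<k. \<Sum>j<k. cnj (v (s + i*2)) * gfun d K0 K1 x (s + i*2) (t + j*2) * v (t + j*2))"
      by (rule swap4)
    also have "\<dots> = (\<Sum>s<2. \<Sum>t<2. \<Sum>i<k. \<Sum>j<k. if s = t then A s i j else 0)"
      unfolding A_def Y_def gfun_def by (intro sum.cong refl) auto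
    also have "\<dots> = (\<Sum>s<2. \<Sum>i<k. \<Sum>j<k. A s i j)"
      by (simp add: sum2)
    also have "\<dots> = (\<Sum>s<2. trF d (if s = 0 then K0 else K1)
        (\<lambda>a b. \<Sum>i<k. \<Sum>j<k. cnj (v (s + i*2)) * v (s + j*2) * x (a + i*d) (b + j*d)))"
      unfolding A_def Y_def trF_sum
      by (intro sum.cong refl) (simp add: trF_scale[symmetric] mult.commute mult.left_commute)
    finally have eq: "qf (k*2) (gfun d K0 K1 x) v = \<dots>" .
    have "0 \<le> Re (trF d (if s = 0 then K0 else K1)
        (\<lambda>a b. \<Sum>i<k. \<Sum>j<k. cnj (v (s + i*2)) * v (s + j*2) * x (a + i*d) (b + j*d)))" for s
      using core[OF _ Z_psd[OF px, of "\<lambda>i. v (s + i*2)"], of "if s = 0 then K0 else K1"] p0 p1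
      by (cases "s = 0") auto
    then show ?thesis unfolding eq Re_sum by (intro sum_nonneg) auto
  qed
  then show ?thesis using herm unfolding psdF_def by blast
qed

definition mp :: "nat \<Rightarrow> (nat \<Rightarrow> nat \<Rightarrow> complex) \<Rightarrow> (nat \<Rightarrow> nat \<Rightarrow> complex) \<Rightarrow> complex mat \<Rightarrow> complex mat" where
  "mp d k0 k1 X = mat 2 2 (\<lambda>(i,j). if i = j then trF d (if i = 0 then k0 else k1) (\<lambda>a b. X $$ (a,b)) else 0)"

lemma mp_carrier[simp]: "mp d k0 k1 X \<in> carrier_mat 2 2" unfolding mp_def by simp

lemma mp_dim[simp]: "dim_row (mp d k0 k1 X) = 2" "dim_col (mp d k0 k1 X) = 2" unfolding mp_def by simp_all

lemma mp_index: "i < 2 \<Longrightarrow> j < 2 \<Longrightarrow> mp d k0 k1 X $$ (i,j) =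
   (if i = j then trF d (if i = 0 then k0 else k1) (\<lambda>a b. X $$ (a,b)) else 0)"
  unfolding mp_def by simp

lemma trF_add: "trF n K (\<lambda>a b. W a b + W' a b) = trF n K W + trF n K W'"
  unfolding trF_def sum.distrib[symmetric] by (intro sum.cong refl) (simp add: distrib_left)

lemma psdF_cong:
  assumes "psdF n f" "\<And>i j. i < n \<Longrightarrow> j < n \<Longrightarrow> f i j = g i j"
  shows "psdF n g"
proof -
  have hf: "hermF n f" using assms(1) unfolding psdF_def by blast
  have "hermF n g" unfolding hermF_def
  proof (intro allI impI)
    fix i j assume "i < n" "j < n"
    then show "g i j = cnj (g j i)" using assms(2)[of i j] assms(2)[of j i] hermF_D[OF hf, of i j] by simp
  qed
  moreover have "qf n g v = qf n f v" for v
    unfolding qf_def using assms(2) by (intro sum.cong refl) simp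
  ultimately show ?thesis using assms(1) unfolding psdF_def by simp
qed

lemma mp_CPTP:
  assumes p0: "psdF d k0" and p1: "psdF d k1"
    and sumI: "\<And>a b. a < d \<Longrightarrow> b < d \<Longrightarrow> k0 a b + k1 a b = (if a = b then 1 else 0)"
  shows "CPTP d 2 (mp d k0 k1)"
  unfolding CPTP_def
proof (intro conjI)
  show "lin_map d 2 (mp d k0 k1)" unfolding lin_map_def
  proof (intro conjI ballI allI)
    fix A B :: "complex mat" assume A: "A \<in> carrier_mat d d" and B: "B \<in> carrier_mat d d"
    show "mp d k0 k1 (A + B) = mp d k0 k1 A + mp d k0 k1 B"
    proof (rule eq_matI)
      fix i j assume "i < dim_row (mp d k0 k1 A + mp d k0 k1 B)" "j < dim_col (mp d k0 k1 A + mp d k0 k1 B)"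
      then have ij: "i < 2" "j < 2" by auto
      have "trF d K (\<lambda>a b. (A + B) $$ (a,b)) = trF d K (\<lambda>a b. A $$ (a,b)) + trF d K (\<lambda>a b. B $$ (a,b))" for K
      proof -
        have "trF d K (\<lambda>a b. (A + B) $$ (a,b)) = trF d K (\<lambda>a b. A $$ (a,b) + B $$ (a,b))"
          by (rule trF_cong) (use A B in simp)
        then show ?thesis by (simp only: trF_add)
      qed
      then show "mp d k0 k1 (A + B) $$ (i,j) = (mp d k0 k1 A + mp d k0 k1 B) $$ (i,j)"
        using ij by (simp add: mp_index)
    qed auto
  next
    fix A :: "complex mat" and c :: complex assume A: "A \<in> carrier_mat d d"
    show "mp d k0 k1 (c \<cdot>\<^sub>m A) = c \<cdot>\<^sub>m mp d k0 k1 A"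
    proof (rule eq_matI)
      fix i j assume "i < dim_row (c \<cdot>\<^sub>m mp d k0 k1 A)" "j < dim_col (c \<cdot>\<^sub>m mp d k0 k1 A)"
      then have ij: "i < 2" "j < 2" by auto
      have "trF d K (\<lambda>a b. (c \<cdot>\<^sub>m A) $$ (a,b)) = c * trF d K (\<lambda>a b. A $$ (a,b))" for K
      proof -
        have "trF d K (\<lambda>a b. (c \<cdot>\<^sub>m A) $$ (a,b)) = trF d K (\<lambda>a b. c * A $$ (a,b))"
          by (rule trF_cong) (use A in simp)
        then show ?thesis by (simp only: trF_scale)
      qed
      then show "mp d k0 k1 (c \<cdot>\<^sub>m A) $$ (i,j) = (c \<cdot>\<^sub>m mp d k0 k1 A) $$ (i,j)"
        using ij by (simp add: mp_index)
    qed auto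
  qed auto
next
  show "trace_preserving d (mp d k0 k1)" unfolding trace_preserving_def
  proof
    fix A :: "complex mat" assume A: "A \<in> carrier_mat d d"
    have "mtrace (mp d k0 k1 A) = trF d k0 (\<lambda>a b. A $$ (a,b)) + trF d k1 (\<lambda>a b. A $$ (a,b))"
      by (simp add: mtrace_eq[of _ 2] sum2 mp_index del: One_nat_def)
    also have "\<dots> = (\<Sum>a<d. \<Sum>b<d. (k0 b a + k1 b a) * A $$ (a,b))"
      unfolding trF_def sum.distrib[symmetric] by (intro sum.cong refl) (simp add: distrib_right)
    also have "\<dots> = (\<Sum>a<d. \<Sum>b<d. (if b = a then A $$ (a,b) else 0))"
      using sumI by (intro sum.cong refl) auto
    also have "\<dots> = mtrace A" using A by (simp add: mtrace_eq[of _ d])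
    finally show "mtrace (mp d k0 k1 A) = mtrace A" .
  qed
next
  show "completely_positive d 2 (mp d k0 k1)" unfolding completely_positive_def
  proof (intro allI impI)
    fix k and X :: "complex mat" assume pX: "psd (k*d) X"
    have X: "X \<in> carrier_mat (k*d) (k*d)" using pX unfolding psd_def by blast
    have px: "psdF (k*d) (\<lambda>i j. X $$ (i,j))" using psd_iff[OF X] pX by blast
    have G: "ampl k d 2 (mp d k0 k1) X \<in> carrier_mat (k*2) (k*2)" unfolding ampl_def by simp
    have "psdF (k*2) (\<lambda>p q. ampl k d 2 (mp d k0 k1) X $$ (p,q))"
    proof (rule psdF_cong[OF block_psd[OF px p0 p1]])
      fix p q assume pq: "p < k*2" "q < k*2"
      have "trF d K (\<lambda>a b. blk d X (p div 2) (q div 2) $$ (a,b)) =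
            trF d K (\<lambda>a b. X $$ (a + (p div 2)*d, b + (q div 2)*d))" for K
        by (rule trF_cong) (simp add: blk_def add.commute)
      then show "gfun d k0 k1 (\<lambda>i j. X $$ (i,j)) p q = ampl k d 2 (mp d k0 k1) X $$ (p,q)"
        unfolding gfun_def ampl_def using pq by (simp add: mp_index)
    qed
    then show "psd (k*2) (ampl k d 2 (mp d k0 k1) X)" using psd_iff[OF G] by blast
  qed
qed

definition U :: "nat \<Rightarrow> nat \<Rightarrow> nat \<Rightarrow> complex mat" where
  "U d a b = mat d d (\<lambda>(x,y). if x = a \<and> y = b then 1 else 0)"

definition XS :: "nat \<Rightarrow> complex mat \<Rightarrow> (nat \<times> nat) set \<Rightarrow> complex mat" where
  "XS d X S = mat d d (\<lambda>(a,b). if (a,b) \<in> S then X $$ (a,b) else 0)"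

lemma lin_mapD:
  assumes "lin_map d n F"
  shows "\<And>A. A \<in> carrier_mat d d \<Longrightarrow> F A \<in> carrier_mat n n"
    "\<And>A B. A \<in> carrier_mat d d \<Longrightarrow> B \<in> carrier_mat d d \<Longrightarrow> F (A + B) = F A + F B"
    "\<And>A c. A \<in> carrier_mat d d \<Longrightarrow> F (c \<cdot>\<^sub>m A) = c \<cdot>\<^sub>m F A"
  using assms unfolding lin_map_def by blast+

lemma expand_XS:
  assumes L: "lin_map d n F" and fin: "finite S" and i: "i < n" and j: "j < n"
  shows "S \<subseteq> {..<d} \<times> {..<d} \<Longrightarrow> F (XS d X S) $$ (i,j) = (\<Sum>p\<in>S. X $$ p * F (U d (fst p) (snd p)) $$ (i,j))"
  using fin
proof (induction S rule: finite_induct)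
  case empty
  have z: "XS d X {} = 0 \<cdot>\<^sub>m (0\<^sub>m d d)" by (rule eq_matI) (auto simp: XS_def)
  have "F (XS d X {}) = 0 \<cdot>\<^sub>m F (0\<^sub>m d d)" unfolding z by (rule lin_mapD(3)[OF L]) simp
  then show ?case using lin_mapD(1)[OF L, of "0\<^sub>m d d"] i j by simp
next
  case (insert p S)
  obtain a b where p: "p = (a,b)" by force
  have ab: "a < d" "b < d" using insert.prems p by auto
  have eq: "XS d X (insert p S) = XS d X S + X $$ p \<cdot>\<^sub>m U d a b"
    by (rule eq_matI) (use insert.hyps p in \<open>auto simp: XS_def U_def\<close>)
  have c1: "XS d X S \<in> carrier_mat d d" unfolding XS_def by simp
  have c2: "X $$ p \<cdot>\<^sub>m U d a b \<in> carrier_mat d d" unfolding U_def by simp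
  have c3: "U d a b \<in> carrier_mat d d" unfolding U_def by simp
  have "F (XS d X (insert p S)) = F (XS d X S) + X $$ p \<cdot>\<^sub>m F (U d a b)"
    unfolding eq lin_mapD(2)[OF L c1 c2] lin_mapD(3)[OF L c3] ..
  then have "F (XS d X (insert p S)) $$ (i,j) = F (XS d X S) $$ (i,j) + X $$ p * F (U d a b) $$ (i,j)"
    using lin_mapD(1)[OF L c1] lin_mapD(1)[OF L c3] i j by simp
  then show ?case using insert p by simp
qed

lemma expand:
  assumes L: "lin_map d n F" and X: "X \<in> carrier_mat d d" and i: "i < n" and j: "j < n"
  shows "F X $$ (i,j) = (\<Sum>a<d. \<Sum>b<d. X $$ (a,b) * F (U d a b) $$ (i,j))"
proof -
  have "XS d X ({..<d} \<times> {..<d}) = X" by (rule eq_matI) (use X in \<open>auto simp: XS_def\<close>)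
  then have "F X $$ (i,j) = (\<Sum>p\<in>{..<d} \<times> {..<d}. X $$ p * F (U d (fst p) (snd p)) $$ (i,j))"
    using expand_XS[OF L _ i j, of "{..<d} \<times> {..<d}" X] by simp
  also have "\<dots> = (\<Sum>a<d. \<Sum>b<d. X $$ (a,b) * F (U d a b) $$ (i,j))"
    unfolding sum.cartesian_product by (intro sum.cong refl) auto
  finally show ?thesis .
qed

lemma CP_psd:
  assumes "lin_map d n F" "completely_positive d n F" "psd d X"
  shows "psd n (F X)"
proof -
  have X: "X \<in> carrier_mat d d" using assms(3) unfolding psd_def by blast
  have c: "F X \<in> carrier_mat n n" using lin_mapD(1)[OF assms(1) X] .
  have "psd (1*n) (ampl 1 d n F X)" using assms(2,3) unfolding completely_positive_def by (metis mult_1)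
  moreover have "blk d X 0 0 = X" by (rule eq_matI) (use X in \<open>auto simp: blk_def\<close>)
  moreover have "ampl 1 d n F X = F X"
  proof (rule eq_matI)
    fix p q assume "p < dim_row (F X)" "q < dim_col (F X)"
    then have "p < n" "q < n" using c by auto
    then show "ampl 1 d n F X $$ (p,q) = F X $$ (p,q)"
      unfolding ampl_def using \<open>blk d X 0 0 = X\<close> by simp
  qed (use c in \<open>auto simp: ampl_def\<close>)
  ultimately show ?thesis by simp
qed

lemma qf_trF: "qf n f w = trF n f (\<lambda>a b. w a * cnj (w b))"
  unfolding qf_def trF_def
  by (subst sum.swap) (intro sum.cong refl, simp add: algebra_simps)

definition Vm :: "nat \<Rightarrow> (nat \<Rightarrow> complex) \<Rightarrow> complex mat" where
  "Vm d w = mat d d (\<lambda>(a,b). w a * cnj (w b))"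

lemma Vm_carrier: "Vm d w \<in> carrier_mat d d" unfolding Vm_def by simp

lemma Vm_psd: "psd d (Vm d w)"
proof -
  have "psdF d (\<lambda>a b. w a * cnj (w b))"
    unfolding psdF_def hermF_def
  proof (intro conjI allI impI)
    fix u
    define z where "z = (\<Sum>a<d. cnj (u a) * w a)"
    have "qf d (\<lambda>a b. w a * cnj (w b)) u = z * cnj z"
      unfolding qf_def z_def cnj_sum sum_product by (intro sum.cong refl) (simp add: algebra_simps)
    then show "0 \<le> Re (qf d (\<lambda>a b. w a * cnj (w b)) u)" by simp
  qed (simp add: mult.commute)
  then show ?thesis using psd_iff[OF Vm_carrier, of d w] unfolding Vm_def
    by (simp add: psdF_def hermF_def qf_def)
qed

lemma trF_id: "trF n (\<lambda>a b. (if a = b then 1 else 0) - f a b) g = (\<Sum>a<n. g a a) - trF n f g"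
proof -
  have "trF n (\<lambda>a b. (if a = b then 1 else 0) - f a b) g =
     (\<Sum>a<n. \<Sum>b<n. (if b = a then g a b else 0)) - trF n f g"
    unfolding trF_def sum_subtractf[symmetric] by (intro sum.cong refl) (simp add: left_diff_distrib)
  also have "(\<Sum>a<n. \<Sum>b<n. (if b = a then g a b else 0)) = (\<Sum>a<n. g a a)"
    by (intro sum.cong refl) simp
  finally show ?thesis .
qed

lemma ket1_carrier: "ket1 \<in> carrier_mat 2 2" unfolding ket1_def by simp

lemma ket1_index: "i < 2 \<Longrightarrow> j < 2 \<Longrightarrow> ket1 $$ (i,j) = (if i = 1 \<and> j = 1 then 1 else 0)"
  unfolding ket1_def by simp

lemma density_D:
  assumes "\<rho> \<in> density d"
  shows "\<rho> \<in> carrier_mat d d" "psdF d (\<lambda>a b. \<rho> $$ (a,b))" "hermF d (\<lambda>a b. \<rho> $$ (a,b))"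
    "mtrace \<rho> = 1" "(\<Sum>a<d. \<rho> $$ (a,a)) = 1"
proof -
  show c: "\<rho> \<in> carrier_mat d d" using assms unfolding density_def psd_def by blast
  show p: "psdF d (\<lambda>a b. \<rho> $$ (a,b))" using assms psd_iff[OF c] unfolding density_def by blast
  show "hermF d (\<lambda>a b. \<rho> $$ (a,b))" using p unfolding psdF_def by blast
  show t: "mtrace \<rho> = 1" using assms unfolding density_def by blast
  show "(\<Sum>a<d. \<rho> $$ (a,a)) = 1" using t mtrace_eq[OF c] by simp
qed

lemma td_bound:
  assumes "psd 2 R" "mtrace R = 1"
  shows "Re (R $$ (0,0)) \<le> trace_dist R ket1"
proof -
  have R: "R \<in> carrier_mat 2 2" using assms unfolding psd_def by blast
  define A where "A = R - ket1"
  have A: "A \<in> carrier_mat 2 2" unfolding A_def by (rule minus_carrier_mat[OF ket1_carrier])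
  have hR: "hermF 2 (\<lambda>i j. R $$ (i,j))" using assms herm_iff[OF R] unfolding psd_def by blast
  have hA: "hermitian_mat A"
    unfolding herm_iff[OF A] hermF_def
  proof (intro allI impI)
    fix i j :: nat assume ij: "i < 2" "j < 2"
    then show "A $$ (i,j) = cnj (A $$ (j,i))"
      unfolding A_def using R ket1_carrier hermF_D[OF hR ij] by (auto simp: ket1_index)
  qed
  have tr: "R $$ (0,0) + R $$ (1,1) = 1" using assms(2) mtrace_eq[OF R] by (simp add: sum2)
  have A00: "A $$ (0,0) = R $$ (0,0)" unfolding A_def using R ket1_carrier by (simp add: ket1_index)
  have "A $$ (1,1) = R $$ (1,1) - 1" unfolding A_def using R ket1_carrier by (simp add: ket1_index)
  then have "A $$ (0,0) + A $$ (1,1) = 0" using tr A00 by (simp add: add_diff_eq)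
  from trace_norm_2[OF A hA this]
  have "trace_dist R ket1 = sqrt ((Re (A $$ (0,0)))^2 + (cmod (A $$ (0,1)))^2)"
    unfolding trace_dist_def A_def by simp
  then show ?thesis unfolding A00 by (simp add: real_sqrt_sum_squares_ge1)
qed

lemma trF_congK: "(\<And>a b. a < n \<Longrightarrow> b < n \<Longrightarrow> K a b = K' a b) \<Longrightarrow> trF n K W = trF n K' W"
  unfolding trF_def by (intro sum.cong refl) auto

lemma extract_test:
  assumes cptp: "CPTP d 2 F"
  shows "\<exists>E. psd d E \<and> psd d (1\<^sub>m d - E) \<and>
    (\<forall>\<rho> \<in> density d. Re (mtrace (\<rho> * (1\<^sub>m d - E))) \<le> trace_dist (F \<rho>) ket1) \<and>
    (\<forall>\<tau> \<in> density d. Re (mtrace (\<tau> * E)) = Re (F \<tau> $$ (1,1)))"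
proof -
  have L: "lin_map d 2 F" and CP: "completely_positive d 2 F" and TP: "trace_preserving d F"
    using cptp unfolding CPTP_def by blast+
  define e where "e = (\<lambda>a b. F (U d a b) $$ (1,1))"
  define Ef where "Ef = (\<lambda>x y. (e y x + cnj (e x y)) / 2)"
  define E where "E = mat d d (\<lambda>(x,y). Ef x y)"
  have Ec: "E \<in> carrier_mat d d" unfolding E_def by simp
  have Ei: "\<And>x y. x < d \<Longrightarrow> y < d \<Longrightarrow> E $$ (x,y) = Ef x y" unfolding E_def by simp
  have hE: "hermF d Ef" unfolding hermF_def Ef_def by (simp add: add.commute)
  have key: "Re (trF d Ef (\<lambda>a b. Y $$ (a,b))) = Re (F Y $$ (1,1))"
    if Y: "Y \<in> carrier_mat d d" and hY: "hermF d (\<lambda>a b. Y $$ (a,b))" for Y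
  proof -
    define T where "T = (\<Sum>a<d. \<Sum>b<d. Y $$ (a,b) * e a b)"
    have FY: "F Y $$ (1,1) = T" unfolding T_def
      unfolding e_def using expand[OF L Y, of 1 1] by simp
    define S2 where "S2 = (\<Sum>a<d. \<Sum>b<d. cnj (e b a) * Y $$ (a,b))"
    have tr: "trF d Ef (\<lambda>a b. Y $$ (a,b)) = (T + S2) / 2"
      unfolding trF_def Ef_def S2_def T_def sum_divide_distrib sum.distrib[symmetric]
      by (intro sum.cong refl) (simp add: algebra_simps add_divide_distrib)
    moreover have "cnj S2 = T"
    proof -
      have "cnj S2 = (\<Sum>a<d. \<Sum>b<d. e b a * Y $$ (b,a))"
        unfolding S2_def cnj_sum
      proof (intro sum.cong refl)
        fix a b assume "a \<in> {..<d}" "b \<in> {..<d}"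
        then have "Y $$ (a,b) = cnj (Y $$ (b,a))" using hermF_D[OF hY, of a b] by simp
        then show "cnj (cnj (e b a) * Y $$ (a,b)) = e b a * Y $$ (b,a)" by simp
      qed
      also have "\<dots> = (\<Sum>b<d. \<Sum>a<d. e b a * Y $$ (b,a))" by (rule sum.swap)
      also have "\<dots> = T" unfolding T_def by (simp add: mult.commute)
      finally show ?thesis .
    qed
    then have "Re (cnj S2) = Re T" by simp
    then have "Re S2 = Re T" by simp
    then show ?thesis unfolding FY tr by simp
  qed
  have Vkey: "Re (qf d Ef w) = Re (F (Vm d w) $$ (1,1))" for w
  proof -
    have "qf d Ef w = trF d Ef (\<lambda>a b. Vm d w $$ (a,b))"
      unfolding qf_trF by (rule trF_cong) (simp add: Vm_def)
    moreover have "hermF d (\<lambda>a b. Vm d w $$ (a,b))"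
      using Vm_psd[of d w] psd_iff[OF Vm_carrier] unfolding psdF_def by blast
    ultimately show ?thesis using key[OF Vm_carrier] by simp
  qed
  have FV: "psdF 2 (\<lambda>i j. F (Vm d w) $$ (i,j))" for w
    using CP_psd[OF L CP Vm_psd[of d w]] psd_iff[OF lin_mapD(1)[OF L Vm_carrier]] by blast
  have pE: "psd d E"
  proof -
    have "psdF d Ef" unfolding psdF_def
    proof (intro conjI allI hE)
      fix w show "0 \<le> Re (qf d Ef w)" unfolding Vkey using psdF_diag(2)[OF FV, of 1] by simp
    qed
    then show ?thesis using psd_iff[OF Ec] psdF_cong[of d Ef "\<lambda>i j. E $$ (i,j)"] Ei by auto
  qed
  define IE where "IE = (\<lambda>a b. (if a = b then 1 else 0) - Ef a b)"
  have IEc: "1\<^sub>m d - E \<in> carrier_mat d d" by (rule minus_carrier_mat[OF Ec])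
  have IEi: "\<And>x y. x < d \<Longrightarrow> y < d \<Longrightarrow> (1\<^sub>m d - E) $$ (x,y) = IE x y"
    unfolding IE_def using Ec Ei by simp
  have pIE: "psd d (1\<^sub>m d - E)"
  proof -
    have "psdF d IE" unfolding psdF_def
    proof (intro conjI allI)
      show "hermF d IE" unfolding hermF_def
      proof (intro allI impI)
        fix i j assume "i < d" "j < d"
        then have "Ef i j = cnj (Ef j i)" by (rule hermF_D[OF hE])
        then show "IE i j = cnj (IE j i)" unfolding IE_def by simp
      qed
      fix w
      have Vc: "F (Vm d w) \<in> carrier_mat 2 2" using lin_mapD(1)[OF L Vm_carrier] .
      have "mtrace (F (Vm d w)) = mtrace (Vm d w)" using TP Vm_carrier unfolding trace_preserving_def by blast
      define sw where "sw = (\<Sum>a<d. w a * cnj (w a))"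
      have tr: "F (Vm d w) $$ (0,0) + F (Vm d w) $$ (1,1) = sw"
        using \<open>mtrace (F (Vm d w)) = mtrace (Vm d w)\<close> mtrace_eq[OF Vc] mtrace_eq[OF Vm_carrier]
        unfolding sw_def by (simp add: sum2 Vm_def)
      have "qf d IE w = sw - qf d Ef w"
        unfolding qf_trF IE_def trF_id sw_def by simp
      then have "Re (qf d IE w) = Re sw - Re (qf d Ef w)" by simp
      also have "Re sw = Re (F (Vm d w) $$ (0,0)) + Re (F (Vm d w) $$ (1,1))" unfolding tr[symmetric] by simp
      finally have "Re (qf d IE w) = Re (F (Vm d w) $$ (0,0))" using Vkey[of w] by simp
      then show "0 \<le> Re (qf d IE w)" using psdF_diag(2)[OF FV, of 0] by simp
    qed
    then show ?thesis using psd_iff[OF IEc] psdF_cong[of d IE "\<lambda>i j. (1\<^sub>m d - E) $$ (i,j)"] IEi by auto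
  qed
  have rho: "Re (mtrace (\<rho> * (1\<^sub>m d - E))) \<le> trace_dist (F \<rho>) ket1" if r: "\<rho> \<in> density d" for \<rho>
  proof -
    note rd = density_D[OF r]
    have Fc: "F \<rho> \<in> carrier_mat 2 2" using lin_mapD(1)[OF L rd(1)] .
    have pF: "psd 2 (F \<rho>)" using CP_psd[OF L CP] r unfolding density_def by blast
    have tF: "mtrace (F \<rho>) = 1" using TP rd(1,4) unfolding trace_preserving_def by simp
    have "mtrace (\<rho> * (1\<^sub>m d - E)) = trF d IE (\<lambda>a b. \<rho> $$ (a,b))"
      unfolding mtrace_mult[OF rd(1) IEc] by (rule trF_congK) (simp add: IEi)
    also have "\<dots> = 1 - trF d Ef (\<lambda>a b. \<rho> $$ (a,b))" unfolding IE_def trF_id rd(5) ..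
    finally have "Re (mtrace (\<rho> * (1\<^sub>m d - E))) = 1 - Re (F \<rho> $$ (1,1))"
      using key[OF rd(1) rd(3)] by simp
    also have "\<dots> = Re (F \<rho> $$ (0,0))"
    proof -
      have "F \<rho> $$ (0,0) + F \<rho> $$ (1,1) = 1" using tF mtrace_eq[OF Fc] by (simp add: sum2)
      then have "Re (F \<rho> $$ (0,0) + F \<rho> $$ (1,1)) = 1" by simp
      then show ?thesis by simp
    qed
    also have "\<dots> \<le> trace_dist (F \<rho>) ket1" by (rule td_bound[OF pF tF])
    finally show ?thesis .
  qed
  have tau: "Re (mtrace (\<tau> * E)) = Re (F \<tau> $$ (1,1))" if t: "\<tau> \<in> density d" for \<tau>
  proof -
    note td = density_D[OF t]
    have "mtrace (\<tau> * E) = trF d Ef (\<lambda>a b. \<tau> $$ (a,b))"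
      unfolding mtrace_mult[OF td(1) Ec] by (rule trF_congK) (simp add: Ei)
    then show ?thesis using key[OF td(1) td(3)] by simp
  qed
  show ?thesis using pE pIE rho tau by blast
qed

lemma psdF_lin:
  assumes "psdF n f" "psdF n g" "0 \<le> \<alpha>" "0 \<le> \<beta>"
  shows "psdF n (\<lambda>a b. of_real \<alpha> * f a b + of_real \<beta> * g a b)"
proof -
  have hf: "hermF n f" and hg: "hermF n g" using assms unfolding psdF_def by blast+
  have "hermF n (\<lambda>a b. of_real \<alpha> * f a b + of_real \<beta> * g a b)" unfolding hermF_def
  proof (intro allI impI)
    fix i j assume ij: "i < n" "j < n"
    show "of_real \<alpha> * f i j + of_real \<beta> * g i j = cnj (of_real \<alpha> * f j i + of_real \<beta> * g j i)"
      using hermF_D[OF hf ij] hermF_D[OF hg ij] by simp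
  qed
  moreover have "qf n (\<lambda>a b. of_real \<alpha> * f a b + of_real \<beta> * g a b) v = of_real \<alpha> * qf n f v + of_real \<beta> * qf n g v" for v
    unfolding qf_def sum_distrib_left sum.distrib[symmetric] by (intro sum.cong refl) (simp add: algebra_simps)
  ultimately show ?thesis using assms unfolding psdF_def by simp
qed

lemma psdF_id: "psdF n (\<lambda>a b. if a = b then 1 else 0)"
proof -
  have "qf n (\<lambda>a b. if a = b then 1 else 0) v = (\<Sum>i<n. cnj (v i) * v i)" for v
    unfolding qf_def by (intro sum.cong refl) (simp add: if_distrib if_distribR cong: if_cong)
  then show ?thesis unfolding psdF_def hermF_def by (simp add: Re_sum sum_nonneg)
qed

lemma trF_idK: "trF n (\<lambda>a b. if a = b then 1 else 0) g = (\<Sum>a<n. g a a)"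
  unfolding trF_def by (intro sum.cong refl) (simp add: if_distrib if_distribR cong: if_cong)

lemma td_diag:
  assumes R: "R \<in> carrier_mat 2 2" "R $$ (0,1) = 0" "R $$ (1,0) = 0"
    "R $$ (0,0) = of_real x" "R $$ (1,1) = 1 - of_real x"
  shows "trace_dist R ket1 = \<bar>x\<bar>"
proof -
  define A where "A = R - ket1"
  have A: "A \<in> carrier_mat 2 2" unfolding A_def by (rule minus_carrier_mat[OF ket1_carrier])
  have Ai: "A $$ (i,j) = R $$ (i,j) - ket1 $$ (i,j)" if "i < 2" "j < 2" for i j
    unfolding A_def using that R(1) ket1_carrier by simp
  have A00: "A $$ (0,0) = of_real x" using Ai[of 0 0] R by (simp add: ket1_index)
  have A11: "A $$ (1,1) = - of_real x" using Ai[of 1 1] R by (simp add: ket1_index)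
  have A01: "A $$ (0,1) = 0" using Ai[of 0 1] R by (simp add: ket1_index)
  have A10: "A $$ (1,0) = 0" using Ai[of 1 0] R by (simp add: ket1_index)
  have "hermF 2 (\<lambda>i j. A $$ (i,j))" unfolding hermF_def
  proof (intro allI impI)
    fix i j :: nat assume "i < 2" "j < 2"
    then show "A $$ (i,j) = cnj (A $$ (j,i))" using A00 A11 A01 A10 by (auto simp: less2)
  qed
  then have hA: "hermitian_mat A" using herm_iff[OF A] by blast
  have "A $$ (0,0) + A $$ (1,1) = 0" using A00 A11 by simp
  from trace_norm_2[OF A hA this] show ?thesis
    unfolding trace_dist_def A_def[symmetric] A00 A01 by simp
qed

lemma trF_linK: "trF n (\<lambda>a b. \<alpha> * K a b + \<beta> * K' a b) W = \<alpha> * trF n K W + \<beta> * trF n K' W"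
  unfolding trF_def sum_distrib_left sum.distrib[symmetric] by (intro sum.cong refl) (simp add: algebra_simps)

lemma build_channel:
  assumes eps: "0 \<le> \<epsilon>" and PD: "\<P> \<subseteq> density d" and ED: "\<E> \<subseteq> density d"
    and pE: "psd d E" and pIE: "psd d (1\<^sub>m d - E)"
    and rho: "\<forall>\<rho>\<in>\<P>. Re (mtrace (\<rho> * (1\<^sub>m d - E))) \<le> \<epsilon>"
    and tau: "\<forall>\<tau>\<in>\<E>. Re (mtrace (\<tau> * E)) \<le> q"
    and M: "1 < M" "q * M < 1" "0 \<le> q"
  shows "\<exists>F. CPTP d 2 F \<and> (\<forall>\<rho>\<in>\<P>. trace_dist (F \<rho>) ket1 \<le> \<epsilon>) \<and> (\<forall>\<tau>\<in>\<E>. F \<tau> \<in> Pi_M M)"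
proof -
  have Ec: "E \<in> carrier_mat d d" using pE unfolding psd_def by blast
  have IEc: "1\<^sub>m d - E \<in> carrier_mat d d" by (rule minus_carrier_mat[OF Ec])
  define Ef where "Ef = (\<lambda>a b. E $$ (a,b))"
  define IE where "IE = (\<lambda>a b. (1\<^sub>m d - E) $$ (a,b))"
  have pEf: "psdF d Ef" unfolding Ef_def using psd_iff[OF Ec] pE by blast
  have pIEf: "psdF d IE" unfolding IE_def using psd_iff[OF IEc] pIE by blast
  have IEi: "IE a b = (if a = b then 1 else 0) - Ef a b" if "a < d" "b < d" for a b
    unfolding IE_def Ef_def using that Ec by simp
  have qM: "q < 1 / M" using M by (simp add: field_simps)
  have q1: "q < 1" using qM M by (smt (verit) divide_less_eq_1_pos)
  define \<delta> where "\<delta> = (1 / M - q) / (1 - q)"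
  have d0: "0 < \<delta>" unfolding \<delta>_def using qM q1 by simp
  have d1: "\<delta> \<le> 1" unfolding \<delta>_def using qM q1 M by (simp add: field_simps)
  have dq1: "\<delta> * (1 - q) = 1 / M - q" unfolding \<delta>_def using q1 by simp
  have dq: "(1 - \<delta>) * q + \<delta> = 1 / M" using dq1 by (simp add: algebra_simps)
  define k0 where "k0 = (\<lambda>a b. of_real (1 - \<delta>) * IE a b + of_real 0 * Ef a b)"
  define k1 where "k1 = (\<lambda>a b. of_real (1 - \<delta>) * Ef a b + of_real \<delta> * (if a = b then 1 else 0))"
  have pk0: "psdF d k0" unfolding k0_def by (rule psdF_lin[OF pIEf pEf]) (use d1 in auto)
  have pk1: "psdF d k1" unfolding k1_def by (rule psdF_lin[OF pEf psdF_id]) (use d0 d1 in auto)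
  have ksum: "k0 a b + k1 a b = (if a = b then 1 else 0)" if "a < d" "b < d" for a b
    unfolding k0_def k1_def IEi[OF that] by (simp add: algebra_simps)
  define F where "F = mp d k0 k1"
  have CF: "CPTP d 2 F" unfolding F_def by (rule mp_CPTP[OF pk0 pk1 ksum])
  have TP: "trace_preserving d F" using CF unfolding CPTP_def by blast
  have diag: "F X $$ (0,0) = trF d k0 (\<lambda>a b. X $$ (a,b))" "F X $$ (1,1) = trF d k1 (\<lambda>a b. X $$ (a,b))"
    "F X $$ (0,1) = 0" "F X $$ (1,0) = 0" for X
    unfolding F_def by (simp_all add: mp_index)
  have k0tr: "trF d k0 (\<lambda>a b. X $$ (a,b)) = of_real (1 - \<delta>) * trF d IE (\<lambda>a b. X $$ (a,b))" for X
    unfolding k0_def by (simp add: trF_def sum_distrib_left mult.assoc)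
  have sum1: "trF d k0 (\<lambda>a b. X $$ (a,b)) + trF d k1 (\<lambda>a b. X $$ (a,b)) = 1" if "X \<in> density d" for X
  proof -
    note xd = density_D[OF that]
    have "mtrace (F X) = 1" using TP xd(1,4) unfolding trace_preserving_def by simp
    then show ?thesis using mtrace_eq[of "F X" 2] diag[of X] unfolding F_def by (simp add: sum2)
  qed
  have real0: "trF d k0 (\<lambda>a b. X $$ (a,b)) = of_real (Re (trF d k0 (\<lambda>a b. X $$ (a,b))))" if "X \<in> density d" for X
    using trF_real[of d k0 "\<lambda>a b. X $$ (a,b)"] pk0 density_D(3)[OF that] unfolding psdF_def by blast
  have rho': "trace_dist (F \<rho>) ket1 \<le> \<epsilon>" if r: "\<rho> \<in> \<P>" for \<rho>
  proof -
    have rd: "\<rho> \<in> density d" using r PD by blast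
    note rr = density_D[OF rd]
    define x where "x = Re (trF d k0 (\<lambda>a b. \<rho> $$ (a,b)))"
    have Fc: "F \<rho> \<in> carrier_mat 2 2" unfolding F_def by simp
    have x0: "F \<rho> $$ (0,0) = of_real x" unfolding x_def diag using real0[OF rd] .
    have x1: "F \<rho> $$ (1,1) = 1 - of_real x" using sum1[OF rd] x0 unfolding diag by (simp add: algebra_simps)
    have td: "trace_dist (F \<rho>) ket1 = \<bar>x\<bar>" by (rule td_diag[OF Fc diag(3,4) x0 x1])
    have "mtrace (\<rho> * (1\<^sub>m d - E)) = trF d IE (\<lambda>a b. \<rho> $$ (a,b))"
      unfolding mtrace_mult[OF rr(1) IEc] IE_def ..
    moreover have "Re (mtrace (\<rho> * (1\<^sub>m d - E))) \<le> \<epsilon>" using rho r by blast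
    ultimately have y: "Re (trF d IE (\<lambda>a b. \<rho> $$ (a,b))) \<le> \<epsilon>" by simp
    have y0: "0 \<le> Re (trF d IE (\<lambda>a b. \<rho> $$ (a,b)))" by (rule core[OF pIEf rr(2)])
    have "x = (1 - \<delta>) * Re (trF d IE (\<lambda>a b. \<rho> $$ (a,b)))" unfolding x_def k0tr by simp
    then have "\<bar>x\<bar> \<le> \<epsilon>" using y y0 d0 d1
      by (smt (verit) mult_left_le_one_le mult_nonneg_nonneg)
    then show ?thesis using td by simp
  qed
  have tau': "F \<tau> \<in> Pi_M M" if t: "\<tau> \<in> \<E>" for \<tau>
  proof -
    have td: "\<tau> \<in> density d" using t ED by blast
    note tt = density_D[OF td]
    define p where "p = Re (trF d k1 (\<lambda>a b. \<tau> $$ (a,b)))"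
    have preal: "trF d k1 (\<lambda>a b. \<tau> $$ (a,b)) = of_real p"
      unfolding p_def using trF_real[of d k1 "\<lambda>a b. \<tau> $$ (a,b)"] pk1 tt(3) unfolding psdF_def by blast
    have "trF d k1 (\<lambda>a b. \<tau> $$ (a,b)) = of_real (1 - \<delta>) * trF d Ef (\<lambda>a b. \<tau> $$ (a,b)) + of_real \<delta> * 1"
      unfolding k1_def trF_linK trF_idK tt(5) by simp
    moreover have "mtrace (\<tau> * E) = trF d Ef (\<lambda>a b. \<tau> $$ (a,b))"
      unfolding mtrace_mult[OF tt(1) Ec] Ef_def ..
    ultimately have pe: "p = (1 - \<delta>) * Re (mtrace (\<tau> * E)) + \<delta>" unfolding p_def by simp
    have e0: "0 \<le> Re (mtrace (\<tau> * E))"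
      unfolding \<open>mtrace (\<tau> * E) = trF d Ef (\<lambda>a b. \<tau> $$ (a,b))\<close> by (rule core[OF pEf tt(2)])
    have eq: "Re (mtrace (\<tau> * E)) \<le> q" using tau t by blast
    have p0: "0 < p" unfolding pe using e0 d0 d1 by (smt (verit) mult_nonneg_nonneg)
    have "p \<le> 1 / M" unfolding pe dq[symmetric] using eq d1 by (smt (verit) mult_left_mono)
    then have Mle: "M \<le> 1 / p" using p0 M by (simp add: field_simps)
    have "F \<tau> = pi_M (1 / p)"
    proof (rule eq_matI)
      fix i j assume "i < dim_row (pi_M (1 / p))" "j < dim_col (pi_M (1 / p))"
      then have ij: "i < 2" "j < 2" by (auto simp: pi_M_def)
      have F11: "F \<tau> $$ (1,1) = of_real p" using diag(2) preal by simp
      have F00: "F \<tau> $$ (0,0) = of_real (1 - p)" using sum1[OF td] diag preal by (simp add: algebra_simps)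
      show "F \<tau> $$ (i,j) = pi_M (1 / p) $$ (i,j)"
        using ij F11 F00 diag(3,4) p0 by (auto simp: pi_M_def less2)
    qed (auto simp: F_def pi_M_def)
    then show ?thesis unfolding Pi_M_def using Mle by blast
  qed
  show ?thesis using CF rho' tau' by blast
qed

lemma psd_one: "psd d (1\<^sub>m d)"
proof -
  have "psdF d (\<lambda>i j. (1\<^sub>m d :: complex mat) $$ (i,j))"
    by (rule psdF_cong[OF psdF_id]) simp
  then show ?thesis using psd_iff[of "1\<^sub>m d" d] by simp
qed

lemma psd_zero: "psd d (0\<^sub>m d d)"
proof -
  have "psdF d (\<lambda>a b. of_real 0 * (if a = b then 1 else 0) + of_real 0 * (if a = b then 1 else 0))"
    by (rule psdF_lin[OF psdF_id psdF_id]) auto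
  then have "psdF d (\<lambda>i j. (0\<^sub>m d d :: complex mat) $$ (i,j))"
    by (rule psdF_cong) simp
  then show ?thesis using psd_iff[of "0\<^sub>m d d" d] by simp
qed

theorem theorem6:
  fixes d :: nat and \<epsilon> :: real and \<P> \<E> :: "complex mat set"
  assumes "0 \<le> \<epsilon>" and "\<epsilon> < 1"
    and "\<P> \<subseteq> density d" and "\<E> \<subseteq> density d"
  shows "work_GPO d \<epsilon> \<P> \<E> = Dmin d \<epsilon> \<P> \<E>"
proof -
  note eps = assms(1) and PD = assms(3) and ED = assms(4)
  define Wset where "Wset = {ereal M | M. M > 1 \<and>
      (\<exists>F. CPTP d 2 F \<and> (\<forall>\<rho> \<in> \<P>. trace_dist (F \<rho>) ket1 \<le> \<epsilon>)
            \<and> (\<forall>\<tau> \<in> \<E>. F \<tau> \<in> Pi_M M))}"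
  define qE where "qE = (\<lambda>E. Sup ({0} \<union> {ereal (Re (mtrace (\<tau> * E))) | \<tau>. \<tau> \<in> \<E>}))"
  define feas where "feas = (\<lambda>E. psd d E \<and> psd d (1\<^sub>m d - E) \<and>
      Sup ({0} \<union> {ereal (Re (mtrace (\<rho> * (1\<^sub>m d - E)))) | \<rho>. \<rho> \<in> \<P>}) \<le> ereal \<epsilon>)"
  define Tset where "Tset = {qE E | E. feas E}"
  define I where "I = Inf Tset"
  define W where "W = Sup ({1} \<union> Wset)"
  have work: "work_GPO d \<epsilon> \<P> \<E> = elog W" unfolding work_GPO_def W_def Wset_def ..
  have dmin: "Dmin d \<epsilon> \<P> \<E> = - elog I" unfolding Dmin_def I_def Tset_def qE_def feas_def ..
  have qE0: "0 \<le> qE E" for E unfolding qE_def by (rule Sup_upper) simp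
  have I0: "0 \<le> I" unfolding I_def Tset_def using qE0 by (auto intro!: Inf_greatest)
  have z: "(1\<^sub>m d - 1\<^sub>m d :: complex mat) = 0\<^sub>m d d" by (rule eq_matI) auto
  have feas1: "feas (1\<^sub>m d)"
  proof -
    have "Sup ({0} \<union> {ereal (Re (mtrace (\<rho> * (1\<^sub>m d - 1\<^sub>m d)))) | \<rho>. \<rho> \<in> \<P>}) \<le> ereal \<epsilon>"
    proof (rule Sup_least)
      fix x assume "x \<in> {0} \<union> {ereal (Re (mtrace (\<rho> * (1\<^sub>m d - 1\<^sub>m d)))) | \<rho>. \<rho> \<in> \<P>}"
      then obtain \<rho> where "x = 0 \<or> (\<rho> \<in> \<P> \<and> x = ereal (Re (mtrace (\<rho> * (1\<^sub>m d - 1\<^sub>m d)))))" by blast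
      moreover have "\<rho> \<in> \<P> \<Longrightarrow> mtrace (\<rho> * (1\<^sub>m d - 1\<^sub>m d)) = 0"
      proof -
        assume "\<rho> \<in> \<P>"
        then have rc: "\<rho> \<in> carrier_mat d d" using PD density_D(1) by blast
        show ?thesis unfolding z using rc by (simp add: mtrace_eq[of _ d])
      qed
      ultimately show "x \<le> ereal \<epsilon>" using eps by auto
    qed
    then show ?thesis unfolding feas_def z using psd_one[of d] psd_zero[of d] by simp
  qed
  have q1: "qE (1\<^sub>m d) \<le> 1" unfolding qE_def
  proof (rule Sup_least)
    fix x assume "x \<in> {0} \<union> {ereal (Re (mtrace (\<tau> * 1\<^sub>m d))) | \<tau>. \<tau> \<in> \<E>}"
    then obtain \<tau> where "x = 0 \<or> (\<tau> \<in> \<E> \<and> x = ereal (Re (mtrace (\<tau> * 1\<^sub>m d))))" by blast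
    moreover have "\<tau> \<in> \<E> \<Longrightarrow> mtrace (\<tau> * 1\<^sub>m d) = 1"
      using ED density_D(1,4) by (metis right_mult_one_mat subsetD)
    ultimately show "x \<le> 1" by auto
  qed
  have I1: "I \<le> 1" unfolding I_def Tset_def using feas1 q1 by (metis (mono_tags, lifting) Inf_lower2 mem_Collect_eq)
  have upper: "I \<le> ereal (1 / M)" if "ereal M \<in> Wset" for M
  proof -
    from that obtain F where M1: "M > 1" and C: "CPTP d 2 F" and FR: "\<forall>\<rho> \<in> \<P>. trace_dist (F \<rho>) ket1 \<le> \<epsilon>"
      and FT: "\<forall>\<tau> \<in> \<E>. F \<tau> \<in> Pi_M M" unfolding Wset_def by auto
    obtain E where pE: "psd d E" and pIE: "psd d (1\<^sub>m d - E)"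
      and r: "\<forall>\<rho> \<in> density d. Re (mtrace (\<rho> * (1\<^sub>m d - E))) \<le> trace_dist (F \<rho>) ket1"
      and t: "\<forall>\<tau> \<in> density d. Re (mtrace (\<tau> * E)) = Re (F \<tau> $$ (1,1))"
      using extract_test[OF C] by blast
    have "feas E" unfolding feas_def
    proof (intro conjI pE pIE Sup_least)
      fix x assume "x \<in> {0} \<union> {ereal (Re (mtrace (\<rho> * (1\<^sub>m d - E)))) | \<rho>. \<rho> \<in> \<P>}"
      then obtain \<rho> where "x = 0 \<or> (\<rho> \<in> \<P> \<and> x = ereal (Re (mtrace (\<rho> * (1\<^sub>m d - E)))))" by blast
      moreover have "\<rho> \<in> \<P> \<Longrightarrow> Re (mtrace (\<rho> * (1\<^sub>m d - E))) \<le> \<epsilon>"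
        using r FR PD by (meson order_trans subsetD)
      ultimately show "x \<le> ereal \<epsilon>" using eps by auto
    qed
    moreover have "qE E \<le> ereal (1 / M)" unfolding qE_def
    proof (rule Sup_least)
      fix x assume "x \<in> {0} \<union> {ereal (Re (mtrace (\<tau> * E))) | \<tau>. \<tau> \<in> \<E>}"
      then obtain \<tau> where "x = 0 \<or> (\<tau> \<in> \<E> \<and> x = ereal (Re (mtrace (\<tau> * E))))" by blast
      moreover have "\<tau> \<in> \<E> \<Longrightarrow> Re (mtrace (\<tau> * E)) \<le> 1 / M"
      proof -
        assume tE: "\<tau> \<in> \<E>"
        then obtain M' where M': "M' \<ge> M" "F \<tau> = pi_M M'" using FT unfolding Pi_M_def by blast
        have "Re (mtrace (\<tau> * E)) = Re (pi_M M' $$ (1,1))" using t tE ED M'(2) by auto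
        also have "\<dots> = 1 / M'" unfolding pi_M_def by simp
        also have "\<dots> \<le> 1 / M" using M' M1 by (simp add: frac_le)
        finally show ?thesis .
      qed
      ultimately show "x \<le> ereal (1 / M)" using M1 by auto
    qed
    ultimately show ?thesis unfolding I_def Tset_def by (metis (mono_tags, lifting) Inf_lower2 mem_Collect_eq)
  qed
  have lower: "ereal M \<in> Wset" if M1: "1 < M" and IM: "I < ereal (1 / M)" for M
  proof -
    obtain x where xT: "x \<in> Tset" and xl: "x < ereal (1 / M)" using IM unfolding I_def Inf_less_iff by blast
    then obtain E where fE: "feas E" and xE: "x = qE E" unfolding Tset_def by blast
    have x0: "0 \<le> x" using qE0 xE by simp
    define q where "q = real_of_ereal x"
    have xq: "x = ereal q" unfolding q_def using x0 xl by (cases x) auto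
    have q0: "0 \<le> q" using x0 xq by simp
    have qM: "q * M < 1" using xl xq M1 by (simp add: field_simps)
    have rho: "\<forall>\<rho>\<in>\<P>. Re (mtrace (\<rho> * (1\<^sub>m d - E))) \<le> \<epsilon>"
    proof
      fix \<rho> assume "\<rho> \<in> \<P>"
      then have "ereal (Re (mtrace (\<rho> * (1\<^sub>m d - E)))) \<le> Sup ({0} \<union> {ereal (Re (mtrace (\<rho> * (1\<^sub>m d - E)))) | \<rho>. \<rho> \<in> \<P>})"
        by (intro Sup_upper) blast
      also have "\<dots> \<le> ereal \<epsilon>" using fE unfolding feas_def by blast
      finally show "Re (mtrace (\<rho> * (1\<^sub>m d - E))) \<le> \<epsilon>" by simp
    qed
    have tau: "\<forall>\<tau>\<in>\<E>. Re (mtrace (\<tau> * E)) \<le> q"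
    proof
      fix \<tau> assume "\<tau> \<in> \<E>"
      then have "ereal (Re (mtrace (\<tau> * E))) \<le> qE E" unfolding qE_def by (intro Sup_upper) blast
      moreover have "qE E = ereal q" using xE xq by simp
      ultimately show "Re (mtrace (\<tau> * E)) \<le> q" by simp
    qed
    obtain F where "CPTP d 2 F" "\<forall>\<rho>\<in>\<P>. trace_dist (F \<rho>) ket1 \<le> \<epsilon>" "\<forall>\<tau>\<in>\<E>. F \<tau> \<in> Pi_M M"
      using build_channel[OF eps PD ED _ _ rho tau M1 qM q0] fE unfolding feas_def by blast
    then show ?thesis unfolding Wset_def using M1 by blast
  qed
  have W1: "1 \<le> W" unfolding W_def by (rule Sup_upper) simp
  show ?thesis
  proof (cases "I = 0")
    case True
    have "W = \<infinity>"
    proof (rule ereal_top)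
      fix B
      show "ereal B \<le> W"
      proof (cases "B \<le> 1")
        case True then show ?thesis using W1 by (metis ereal_less_eq(3) order_trans one_ereal_def)
      next
        case False
        then have "ereal B \<in> Wset" using lower[of B] \<open>I = 0\<close> by simp
        then show ?thesis unfolding W_def by (intro Sup_upper) simp
      qed
    qed
    then show ?thesis unfolding work dmin using True by (simp add: elog_def)
  next
    case False
    then obtain r where Ir: "I = ereal r" and r0: "0 < r" and r1: "r \<le> 1"
      using I0 I1 by (cases I) auto
    have Wle: "W \<le> ereal (1 / r)" unfolding W_def
    proof (rule Sup_least)
      fix x assume "x \<in> {1} \<union> Wset"
      then show "x \<le> ereal (1 / r)"
      proof
        assume "x \<in> {1}" then show ?thesis using r0 r1 by simp
      next
        assume xW: "x \<in> Wset"
        then obtain M where xM: "x = ereal M" and M1: "M > 1" unfolding Wset_def by blast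
        have "r \<le> 1 / M" using upper[of M] xW xM Ir by simp
        then show ?thesis using xM r0 M1 by (simp add: field_simps)
      qed
    qed
    have Wge: "ereal (1 / r) \<le> W"
    proof (cases "r = 1")
      case True then show ?thesis using W1 by (metis one_ereal_def divide_self_if zero_neq_one)
    next
      case False
      then have r1': "1 < 1 / r" using r0 r1 by simp
      obtain w where Ww: "W = ereal w" using Wle W1 by (cases W) auto
      have "1 / r \<le> w"
      proof (rule dense_le_bounded[OF r1'])
        fix M assume "1 < M" "M < 1 / r"
        then have "I < ereal (1 / M)" using Ir r0 by (simp add: field_simps)
        then have "ereal M \<in> Wset" using lower \<open>1 < M\<close> by blast
        then have "ereal M \<le> W" unfolding W_def by (intro Sup_upper) simp
        then show "M \<le> w" using Ww by simp
      qed
      then show ?thesis using Ww by simp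
    qed
    have "W = ereal (1 / r)" using Wle Wge by simp
    then show ?thesis unfolding work dmin Ir using r0 by (simp add: elog_def log_recip)
  qed
qed


end
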